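(* Let $\mu>0$ and $\lambda_1>0$, and consider the system $$\frac{dx}{dt}=\lambda_1\bigl(2\mu y-4\mu xy-2x^2-2xy+x\bigr),\qquad \frac{dy}{dt}=\lambda_1\bigl(\mu y-4\mu y^2-2xy-2y^2+y\bigr).$$ Let $Q\subset\mathbb{R}^2$ be the closed quadrangle defined by $y\ge x/2$, $y\ge 1/2-x$, $y\le 1/3$, $y\le 1/2-x/2$. Then the fixed points of this system in $Q$ are given by $$x_c=\frac{2\mu+2}{4\mu+6}=\frac{\mu+1}{2\mu+3},\qquad y_c=\frac{\mu+1}{4\mu+6}.$$
   Context: $Q$ is the domain of convex mosaics in the inverse symbolic plane, with vertices $(1/3,1/6)$, $(1/2,1/4)$, $(1/3,1/3)$, $(1/6,1/3)$. *)

theory Defs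
  imports Complex_Main
begin

definition Q :: "(real \<times> real) set" where
  "Q = {(x, y). y \<ge> x / 2 \<and> y \<ge> 1/2 - x \<and> y \<le> 1/3 \<and> y \<le> 1/2 - x / 2}"

definition vf :: "real \<Rightarrow> real \<Rightarrow> real \<times> real \<Rightarrow> real \<times> real" where
  "vf \<mu> lam1 p = (case p of (x, y) \<Rightarrow>
     (lam1 * (2*\<mu>*y - 4*\<mu>*x*y - 2*x^2 - 2*x*y + x),
      lam1 * (\<mu>*y - 4*\<mu>*y^2 - 2*x*y - 2*y^2 + y)))"

end

theory Submission
  imports Defs
begin

theorem lemma5:
  fixes \<mu> lam1 :: real
  assumes "\<mu> > 0" and "lam1 > 0"
  shows "{p \<in> Q. vf \<mu> lam1 p = (0, 0)} =
         {((2*\<mu> + 2) / (4*\<mu> + 6), (\<mu> + 1) / (4*\<mu> + 6))}"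
proof (rule set_eqI)
  fix p :: "real \<times> real"
  obtain x y where p: "p = (x, y)" by (cases p)
  have d: "4*\<mu> + 6 > 0" using assms by simp
  show "p \<in> {p \<in> Q. vf \<mu> lam1 p = (0, 0)} \<longleftrightarrow>
        p \<in> {((2*\<mu> + 2) / (4*\<mu> + 6), (\<mu> + 1) / (4*\<mu> + 6))}"
  proof
    assume "p \<in> {p \<in> Q. vf \<mu> lam1 p = (0, 0)}"
    then have q: "y \<ge> x / 2" "y \<ge> 1/2 - x" and
      e1: "lam1 * (2*\<mu>*y - 4*\<mu>*x*y - 2*x^2 - 2*x*y + x) = 0" and
      e2: "lam1 * (\<mu>*y - 4*\<mu>*y^2 - 2*x*y - 2*y^2 + y) = 0"
      by (auto simp: p Q_def vf_def)
    have f1: "2*\<mu>*y - 4*\<mu>*x*y - 2*x^2 - 2*x*y + x = 0" using e1 assms by simp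
    have f2': "\<mu>*y - 4*\<mu>*y^2 - 2*x*y - 2*y^2 + y = 0" using e2 assms by simp
    have f2: "y * (\<mu> - 4*\<mu>*y - 2*x - 2*y + 1) = 0" using f2'
      by (simp add: algebra_simps power2_eq_square)
    have "y > 0" using q by linarith
    then have g: "\<mu> - 4*\<mu>*y - 2*x - 2*y + 1 = 0" using f2 by simp
    then have xe: "x = (\<mu>+1)/2 - (2*\<mu>+1)*y" by (simp add: algebra_simps)
    have "\<mu>*(2*\<mu>+3)*y - (\<mu>+1)/2*\<mu> = 0"
    proof -
      have "2*\<mu>*y - 4*\<mu>*x*y - 2*x^2 - 2*x*y + x = \<mu>*(2*\<mu>+3)*y - (\<mu>+1)/2*\<mu>"
        unfolding xe by (simp add: power2_eq_square field_simps)
      then show ?thesis using f1 by simp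
    qed
    then have "\<mu>*((2*\<mu>+3)*y - (\<mu>+1)/2) = 0" by (simp add: algebra_simps)
    then have "(2*\<mu>+3)*y = (\<mu>+1)/2" using assms by simp
    then have ye: "y = (\<mu> + 1) / (4*\<mu> + 6)" using d by (simp add: field_simps)
    have "x = (2*\<mu> + 2) / (4*\<mu> + 6)" using d unfolding xe ye
      by (simp add: field_simps)
    then show "p \<in> {((2*\<mu> + 2) / (4*\<mu> + 6), (\<mu> + 1) / (4*\<mu> + 6))}"
      using ye p by simp
  next
    assume "p \<in> {((2*\<mu> + 2) / (4*\<mu> + 6), (\<mu> + 1) / (4*\<mu> + 6))}"
    then have px: "p = ((2*\<mu> + 2) / (4*\<mu> + 6), (\<mu> + 1) / (4*\<mu> + 6))" by simp
    have i1: "(\<mu> + 1) / (4*\<mu> + 6) \<ge> 1/2 - (2*\<mu> + 2) / (4*\<mu> + 6)"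
      using d assms by (simp add: divide_simps algebra_simps)
    have i2: "(\<mu> + 1) / (4*\<mu> + 6) \<le> 1/3"
      using d assms by (simp add: divide_simps algebra_simps)
    have i3: "(\<mu> + 1) / (4*\<mu> + 6) \<le> 1/2 - (2*\<mu> + 2) / (4*\<mu> + 6) / 2"
      using d assms by (simp add: divide_simps algebra_simps)
    have i0: "(\<mu> + 1) / (4*\<mu> + 6) \<ge> (2*\<mu> + 2) / (4*\<mu> + 6) / 2"
      using d assms by (simp add: divide_simps algebra_simps)
    have "p \<in> Q" unfolding px Q_def using i0 i1 i2 i3 by (simp only: mem_Collect_eq case_prod_conv)
    moreover have "vf \<mu> lam1 p = (0, 0)"
    proof -
      define yc where "yc = (\<mu> + 1) / (4*\<mu> + 6)"
      have xc: "(2*\<mu> + 2) / (4*\<mu> + 6) = 2*yc" unfolding yc_def by (simp add: field_simps)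
      have k: "\<mu> + 1 - (4*\<mu> + 6)*yc = 0" unfolding yc_def using d by simp
      have a: "2*\<mu>*yc - 4*\<mu>*(2*yc)*yc - 2*(2*yc)^2 - 2*(2*yc)*yc + 2*yc = 2*yc*(\<mu> + 1 - (4*\<mu> + 6)*yc)"
        by (simp add: algebra_simps power2_eq_square)
      have b: "\<mu>*yc - 4*\<mu>*yc^2 - 2*(2*yc)*yc - 2*yc^2 + yc = yc*(\<mu> + 1 - (4*\<mu> + 6)*yc)"
        by (simp add: algebra_simps power2_eq_square)
      show ?thesis unfolding px vf_def xc yc_def[symmetric] using a b k by simp
    qed
    ultimately show "p \<in> {p \<in> Q. vf \<mu> lam1 p = (0, 0)}" by simp
  qed
qed

end
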